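(* Every irreducible $\lambda$-quiddity over the ring $(\mathbb{Z}/2\mathbb{Z})\times(\mathbb{Z}/4\mathbb{Z})$ has size $3$, $4$ or $6$.
   Context: For $a_1,\ldots,a_n$ in a commutative unital ring $A$, $M_n(a_1,\ldots,a_n)=\begin{pmatrix}a_n&-1\\1&0\end{pmatrix}\cdots\begin{pmatrix}a_1&-1\\1&0\end{pmatrix}$. An $n$-tuple $(a_1,\ldots,a_n)\in A^n$ is a $\lambda$-quiddity over $A$ of size $n$ if $M_n(a_1,\ldots,a_n)=\pm\mathrm{Id}$. For $(a_1,\ldots,a_n)\in A^n$, $(b_1,\ldots,b_m)\in A^m$, define $(a_1,\ldots,a_n)\oplus(b_1,\ldots,b_m)=(a_1+b_m,a_2,\ldots,a_{n-1},a_n+b_1,b_2,\ldots,b_{m-1})$. Write $(a_1,\ldots,a_n)\sim(b_1,\ldots,b_n)$ if $(b_1,\ldots,b_n)$ is obtained from $(a_1,\ldots,a_n)$ or from $(a_n,\ldots,a_1)$ by a cyclic permutation. A $\lambda$-quiddity $(c_1,\ldots,c_n)$ with $n\ge3$ is reducible if there exist a $\lambda$-quiddity $(b_1,\ldots,b_l)$ and a tuple $(a_1,\ldots,a_m)$ with $l,m\ge3$ and $(c_1,\ldots,c_n)\sim(a_1,\ldots,a_m)\oplus(b_1,\ldots,b_l)$; it is irreducible otherwise (by convention $(0,0)$ is reducible). *)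

theory Defs
  imports Main "HOL-Library.Numeral_Type" "HOL-Library.Product_Plus"
begin

instantiation prod :: (times, times) times
begin
definition times_prod_def: "x * y = (fst x * fst y, snd x * snd y)"
instance ..
end

instantiation prod :: (one, one) one
begin
definition one_prod_def: "1 = (1, 1)"
instance ..
end

lemma fst_mult_prod [simp]: "fst (x * y) = fst x * fst y"
  and snd_mult_prod [simp]: "snd (x * y) = snd x * snd y"
  and fst_one_prod [simp]: "fst (1 :: 'a::one \<times> 'b::one) = 1"
  and snd_one_prod [simp]: "snd (1 :: 'a::one \<times> 'b::one) = 1"
  by (simp_all add: times_prod_def one_prod_def)

instance prod :: (comm_ring_1, comm_ring_1) comm_ring_1
  by standard (auto simp: prod_eq_iff algebra_simps)

section \<open>2x2 matrices over a commutative ring, as tuples (a11, a12, a21, a22)\<close>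

type_synonym 'a mat2 = "'a \<times> 'a \<times> 'a \<times> 'a"

definition mat2_mult :: "'a::comm_ring_1 mat2 \<Rightarrow> 'a mat2 \<Rightarrow> 'a mat2" where
  "mat2_mult A B = (case A of (a, b, c, d) \<Rightarrow> case B of (e, f, g, h) \<Rightarrow>
      (a * e + b * g, a * f + b * h, c * e + d * g, c * f + d * h))"

definition mat2_id :: "'a::comm_ring_1 mat2" where
  "mat2_id = (1, 0, 0, 1)"

definition mat2_elem :: "'a::comm_ring_1 \<Rightarrow> 'a mat2" where
  "mat2_elem a = (a, -1, 1, 0)"

text \<open>M_n(a_1,...,a_n) = elem(a_n) * ... * elem(a_1); the list [a_1,...,a_n] is the tuple.\<close>
definition Mn :: "'a::comm_ring_1 list \<Rightarrow> 'a mat2" where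
  "Mn as = fold (\<lambda>a M. mat2_mult (mat2_elem a) M) as mat2_id"

definition lambda_quiddity :: "'a::comm_ring_1 list \<Rightarrow> bool" where
  "lambda_quiddity c \<longleftrightarrow> length c \<ge> 1 \<and>
     (Mn c = mat2_id \<or> Mn c = (-1, 0, 0, -1))"

text \<open>(a_1..a_n) \<oplus> (b_1..b_m) = (a_1+b_m, a_2, ..., a_{n-1}, a_n+b_1, b_2, ..., b_{m-1})
  (used only for n, m \<ge> 3).\<close>
definition qsum :: "'a::comm_ring_1 list \<Rightarrow> 'a list \<Rightarrow> 'a list" where
  "qsum a b = [a ! 0 + b ! (length b - 1)] @ take (length a - 2) (drop 1 a)
      @ [a ! (length a - 1) + b ! 0] @ take (length b - 2) (drop 1 b)"

definition qequiv :: "'a list \<Rightarrow> 'a list \<Rightarrow> bool" where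
  "qequiv a b \<longleftrightarrow> (\<exists>k. b = rotate k a \<or> b = rotate k (rev a))"

definition reducible_quiddity :: "'a::comm_ring_1 list \<Rightarrow> bool" where
  "reducible_quiddity c \<longleftrightarrow> c = [0, 0] \<or>
     (length c \<ge> 3 \<and> (\<exists>a b. lambda_quiddity b \<and> length b \<ge> 3 \<and> length a \<ge> 3 \<and>
        qequiv c (qsum a b)))"

definition irreducible_quiddity :: "'a::comm_ring_1 list \<Rightarrow> bool" where
  "irreducible_quiddity c \<longleftrightarrow> lambda_quiddity c \<and> \<not> reducible_quiddity c"

end

theory Submission imports Defs begin

definition ext :: "(2\<times>4) list \<Rightarrow> bool" where
 "ext w \<longleftrightarrow> (\<exists>x y. lambda_quiddity (x # w @ [y]))"

lemma extI: "lambda_quiddity (x # w @ [y]) \<Longrightarrow> ext w"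
  unfolding ext_def by blast

lemma mult_Pair: "(a,b)*(c,d) = (a*c, b*d)" by (simp add: times_prod_def)
lemma numeral_prod: "(numeral k :: 'a::comm_ring_1 \<times> 'b::comm_ring_1) = (numeral k, numeral k)"
  by (induct k) (simp_all only: numeral_One numeral_Bit0 numeral_Bit1 one_prod_def add_Pair)

lemmas qsimps = lambda_quiddity_def Mn_def mat2_mult_def mat2_elem_def mat2_id_def
  mult_Pair numeral_prod one_prod_def zero_prod_def

lemma ext_0: "ext [(1,1)]" by (rule extI[of "(1,1)" _ "(1,1)"]) (simp add: qsimps)
lemma ext_1: "ext [(1,3)]" by (rule extI[of "(1,3)" _ "(1,3)"]) (simp add: qsimps)
lemma ext_2: "ext [(0,0), (0,0)]" by (rule extI[of "(0,0)" _ "(0,0)"]) (simp add: qsimps)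
lemma ext_3: "ext [(0,0), (0,1)]" by (rule extI[of "(0,3)" _ "(0,0)"]) (simp add: qsimps)
lemma ext_4: "ext [(0,0), (0,2)]" by (rule extI[of "(0,2)" _ "(0,0)"]) (simp add: qsimps)
lemma ext_5: "ext [(0,0), (0,3)]" by (rule extI[of "(0,1)" _ "(0,0)"]) (simp add: qsimps)
lemma ext_6: "ext [(0,0), (1,0)]" by (rule extI[of "(1,0)" _ "(0,0)"]) (simp add: qsimps)
lemma ext_7: "ext [(0,0), (1,2)]" by (rule extI[of "(1,2)" _ "(0,0)"]) (simp add: qsimps)
lemma ext_8: "ext [(0,1), (0,0)]" by (rule extI[of "(0,0)" _ "(0,3)"]) (simp add: qsimps)
lemma ext_9: "ext [(0,1), (0,2)]" by (rule extI[of "(0,2)" _ "(0,1)"]) (simp add: qsimps)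
lemma ext_10: "ext [(0,1), (1,0)]" by (rule extI[of "(1,0)" _ "(0,3)"]) (simp add: qsimps)
lemma ext_11: "ext [(0,1), (1,2)]" by (rule extI[of "(1,2)" _ "(0,1)"]) (simp add: qsimps)
lemma ext_12: "ext [(0,2), (0,0)]" by (rule extI[of "(0,0)" _ "(0,2)"]) (simp add: qsimps)
lemma ext_13: "ext [(0,2), (0,1)]" by (rule extI[of "(0,1)" _ "(0,2)"]) (simp add: qsimps)
lemma ext_14: "ext [(0,2), (0,2)]" by (rule extI[of "(0,2)" _ "(0,2)"]) (simp add: qsimps)
lemma ext_15: "ext [(0,2), (0,3)]" by (rule extI[of "(0,3)" _ "(0,2)"]) (simp add: qsimps)
lemma ext_16: "ext [(0,2), (1,0)]" by (rule extI[of "(1,0)" _ "(0,2)"]) (simp add: qsimps)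
lemma ext_17: "ext [(0,2), (1,2)]" by (rule extI[of "(1,2)" _ "(0,2)"]) (simp add: qsimps)
lemma ext_18: "ext [(0,3), (0,0)]" by (rule extI[of "(0,0)" _ "(0,1)"]) (simp add: qsimps)
lemma ext_19: "ext [(0,3), (0,2)]" by (rule extI[of "(0,2)" _ "(0,3)"]) (simp add: qsimps)
lemma ext_20: "ext [(0,3), (1,0)]" by (rule extI[of "(1,0)" _ "(0,1)"]) (simp add: qsimps)
lemma ext_21: "ext [(0,3), (1,2)]" by (rule extI[of "(1,2)" _ "(0,3)"]) (simp add: qsimps)
lemma ext_22: "ext [(1,0), (0,0)]" by (rule extI[of "(0,0)" _ "(1,0)"]) (simp add: qsimps)
lemma ext_23: "ext [(1,0), (0,1)]" by (rule extI[of "(0,3)" _ "(1,0)"]) (simp add: qsimps)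
lemma ext_24: "ext [(1,0), (0,2)]" by (rule extI[of "(0,2)" _ "(1,0)"]) (simp add: qsimps)
lemma ext_25: "ext [(1,0), (0,3)]" by (rule extI[of "(0,1)" _ "(1,0)"]) (simp add: qsimps)
lemma ext_26: "ext [(1,2), (0,0)]" by (rule extI[of "(0,0)" _ "(1,2)"]) (simp add: qsimps)
lemma ext_27: "ext [(1,2), (0,1)]" by (rule extI[of "(0,1)" _ "(1,2)"]) (simp add: qsimps)
lemma ext_28: "ext [(1,2), (0,2)]" by (rule extI[of "(0,2)" _ "(1,2)"]) (simp add: qsimps)
lemma ext_29: "ext [(1,2), (0,3)]" by (rule extI[of "(0,3)" _ "(1,2)"]) (simp add: qsimps)
lemma quad_0: "ext [(0,1), (0,1), (0,1), (0,1)]" by (rule extI[of "(0,1)" _ "(0,1)"]) (simp add: qsimps)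
lemma quad_1: "ext [(0,1), (0,1), (0,1), (0,3)]" by (rule extI[of "(0,3)" _ "(0,3)"]) (simp add: qsimps)
lemma quad_2: "ext [(0,1), (0,1), (0,3), (0,1)]" by (rule extI[of "(0,3)" _ "(0,1)"]) (simp add: qsimps)
lemma quad_3: "ext [(0,1), (0,1), (0,3), (0,3)]" by (rule extI[of "(0,1)" _ "(0,3)"]) (simp add: qsimps)
lemma quad_4: "ext [(0,1), (0,3), (0,1), (0,1)]" by (rule extI[of "(0,1)" _ "(0,3)"]) (simp add: qsimps)
lemma quad_5: "ext [(0,1), (0,3), (0,1), (0,3)]" by (rule extI[of "(0,3)" _ "(0,1)"]) (simp add: qsimps)
lemma quad_6: "ext [(0,1), (0,3), (0,3), (0,1)]" by (rule extI[of "(0,3)" _ "(0,3)"]) (simp add: qsimps)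
lemma quad_7: "ext [(0,1), (0,3), (0,3), (0,3)]" by (rule extI[of "(0,1)" _ "(0,1)"]) (simp add: qsimps)
lemma quad_8: "ext [(0,3), (0,1), (0,1), (0,1)]" by (rule extI[of "(0,3)" _ "(0,3)"]) (simp add: qsimps)
lemma quad_9: "ext [(0,3), (0,1), (0,1), (0,3)]" by (rule extI[of "(0,1)" _ "(0,1)"]) (simp add: qsimps)
lemma quad_10: "ext [(0,3), (0,1), (0,3), (0,1)]" by (rule extI[of "(0,1)" _ "(0,3)"]) (simp add: qsimps)
lemma quad_11: "ext [(0,3), (0,1), (0,3), (0,3)]" by (rule extI[of "(0,3)" _ "(0,1)"]) (simp add: qsimps)
lemma quad_12: "ext [(0,3), (0,3), (0,1), (0,1)]" by (rule extI[of "(0,3)" _ "(0,1)"]) (simp add: qsimps)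
lemma quad_13: "ext [(0,3), (0,3), (0,1), (0,3)]" by (rule extI[of "(0,1)" _ "(0,3)"]) (simp add: qsimps)
lemma quad_14: "ext [(0,3), (0,3), (0,3), (0,1)]" by (rule extI[of "(0,1)" _ "(0,1)"]) (simp add: qsimps)
lemma quad_15: "ext [(0,3), (0,3), (0,3), (0,3)]" by (rule extI[of "(0,3)" _ "(0,3)"]) (simp add: qsimps)
lemma quad_16: "ext [(1,0), (1,0), (1,0), (1,0)]" by (rule extI[of "(1,0)" _ "(1,0)"]) (simp add: qsimps)
lemma quad_17: "ext [(1,0), (1,0), (1,0), (1,2)]" by (rule extI[of "(1,2)" _ "(1,0)"]) (simp add: qsimps)
lemma quad_18: "ext [(1,0), (1,0), (1,2), (1,0)]" by (rule extI[of "(1,0)" _ "(1,2)"]) (simp add: qsimps)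
lemma quad_19: "ext [(1,0), (1,0), (1,2), (1,2)]" by (rule extI[of "(1,2)" _ "(1,2)"]) (simp add: qsimps)
lemma quad_20: "ext [(1,0), (1,2), (1,0), (1,0)]" by (rule extI[of "(1,2)" _ "(1,0)"]) (simp add: qsimps)
lemma quad_21: "ext [(1,0), (1,2), (1,0), (1,2)]" by (rule extI[of "(1,0)" _ "(1,0)"]) (simp add: qsimps)
lemma quad_22: "ext [(1,0), (1,2), (1,2), (1,0)]" by (rule extI[of "(1,2)" _ "(1,2)"]) (simp add: qsimps)
lemma quad_23: "ext [(1,0), (1,2), (1,2), (1,2)]" by (rule extI[of "(1,0)" _ "(1,2)"]) (simp add: qsimps)
lemma quad_24: "ext [(1,2), (1,0), (1,0), (1,0)]" by (rule extI[of "(1,0)" _ "(1,2)"]) (simp add: qsimps)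
lemma quad_25: "ext [(1,2), (1,0), (1,0), (1,2)]" by (rule extI[of "(1,2)" _ "(1,2)"]) (simp add: qsimps)
lemma quad_26: "ext [(1,2), (1,0), (1,2), (1,0)]" by (rule extI[of "(1,0)" _ "(1,0)"]) (simp add: qsimps)
lemma quad_27: "ext [(1,2), (1,0), (1,2), (1,2)]" by (rule extI[of "(1,2)" _ "(1,0)"]) (simp add: qsimps)
lemma quad_28: "ext [(1,2), (1,2), (1,0), (1,0)]" by (rule extI[of "(1,2)" _ "(1,2)"]) (simp add: qsimps)
lemma quad_29: "ext [(1,2), (1,2), (1,0), (1,2)]" by (rule extI[of "(1,0)" _ "(1,2)"]) (simp add: qsimps)
lemma quad_30: "ext [(1,2), (1,2), (1,2), (1,0)]" by (rule extI[of "(1,2)" _ "(1,0)"]) (simp add: qsimps)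
lemma quad_31: "ext [(1,2), (1,2), (1,2), (1,2)]" by (rule extI[of "(1,0)" _ "(1,0)"]) (simp add: qsimps)

lemmas extfacts = ext_0 ext_1 ext_2 ext_3 ext_4 ext_5 ext_6 ext_7 ext_8 ext_9 ext_10 ext_11 ext_12
  ext_13 ext_14 ext_15 ext_16 ext_17 ext_18 ext_19 ext_20 ext_21 ext_22 ext_23 ext_24 ext_25
  ext_26 ext_27 ext_28 ext_29
lemmas quadfacts = quad_0 quad_1 quad_2 quad_3 quad_4 quad_5 quad_6 quad_7 quad_8 quad_9 quad_10
  quad_11 quad_12 quad_13 quad_14 quad_15 quad_16 quad_17 quad_18 quad_19 quad_20 quad_21 quad_22
  quad_23 quad_24 quad_25 quad_26 quad_27 quad_28 quad_29 quad_30 quad_31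

lemma ex2: "(x::2) = 0 \<or> x = 1"
proof (cases x rule: bit0_cases)
  case (of_int z) then have "z = 0 \<or> z = 1" by auto
  then show ?thesis using of_int by auto
qed

lemma ex4: "(x::4) = 0 \<or> x = 1 \<or> x = 2 \<or> x = 3"
proof (cases x rule: bit0_cases)
  case (of_int z) then have "z = 0 \<or> z = 1 \<or> z = 2 \<or> z = 3" by auto
  then show ?thesis using of_int by auto
qed

lemma ex8: "(u::2\<times>4) = (0,0) \<or> u = (0,1) \<or> u = (0,2) \<or> u = (0,3) \<or>
   u = (1,0) \<or> u = (1,1) \<or> u = (1,2) \<or> u = (1,3)"
proof (cases u)
  case (Pair a b) then show ?thesis using ex2[of a] ex4[of b] by auto
qed

definition grpA :: "2\<times>4 \<Rightarrow> bool" where "grpA u \<longleftrightarrow> u = (0,1) \<or> u = (0,3)"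
definition grpB :: "2\<times>4 \<Rightarrow> bool" where "grpB u \<longleftrightarrow> u = (1,0) \<or> u = (1,2)"

lemma pairs: "ext [u] \<or> ext [v] \<or> ext [u,v] \<or> (grpA u \<and> grpA v) \<or> (grpB u \<and> grpB v)"
  using ex8[of u] ex8[of v] unfolding grpA_def grpB_def
  by (elim disjE) (simp_all add: extfacts)

lemma quadA: "grpA p \<Longrightarrow> grpA q \<Longrightarrow> grpA s \<Longrightarrow> grpA t \<Longrightarrow> ext [p,q,s,t]"
  unfolding grpA_def by (elim disjE) (simp_all add: quadfacts)
lemma quadB: "grpB p \<Longrightarrow> grpB q \<Longrightarrow> grpB s \<Longrightarrow> grpB t \<Longrightarrow> ext [p,q,s,t]"
  unfolding grpB_def by (elim disjE) (simp_all add: quadfacts)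

lemma fiveA: "grpA p \<Longrightarrow> grpA q \<Longrightarrow> grpA s \<Longrightarrow> grpA t \<Longrightarrow> grpA u \<Longrightarrow>
   \<not> lambda_quiddity [p,q,s,t,u]"
  unfolding grpA_def by (elim disjE) (simp_all add: qsimps)
lemma fiveB: "grpB p \<Longrightarrow> grpB q \<Longrightarrow> grpB s \<Longrightarrow> grpB t \<Longrightarrow> grpB u \<Longrightarrow>
   \<not> lambda_quiddity [p,q,s,t,u]"
  unfolding grpB_def by (elim disjE) (simp_all add: qsimps)


lemma reduce:
  fixes c :: "'a::comm_ring_1 list"
  assumes q: "lambda_quiddity (x # w @ [y])" and w: "w \<noteq> []"
    and rot: "rotate k c = w @ r" and r: "length r \<ge> 3"
  shows "reducible_quiddity c"
proof -
  obtain r0 r' where r1: "r = r0 # r'" using r by (cases r) auto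
  obtain mid rl where r2: "r' = mid @ [rl]" using r r1 by (cases r' rule: rev_cases) auto
  define a where "a = (r0 - y) # mid @ [rl - x]"
  define b where "b = x # w @ [y]"
  have lc: "length c \<ge> 3" using arg_cong[OF rot, of length] r by simp
  have la: "length a \<ge> 3" using r r1 r2 by (simp add: a_def)
  have lb: "length b \<ge> 3" using w by (cases w) (auto simp: b_def)
  have qs: "qsum a b = r @ w"
    by (simp add: qsum_def a_def b_def r1 r2 nth_append)
  have "r @ w = rotate (length w + k) c"
    by (simp add: rotate_rotate[symmetric] rot rotate_append)
  then have "qequiv c (qsum a b)" unfolding qequiv_def qs by blast
  then show ?thesis unfolding reducible_quiddity_def using q la lb lc by (auto simp: b_def)
qed

lemma reduce_ext:
  fixes c :: "(2\<times>4) list"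
  assumes "ext w" "w \<noteq> []" "rotate k c = w @ r" "length r \<ge> 3"
  shows "reducible_quiddity c"
  using assms reduce unfolding ext_def by blast

lemma grpAB: "grpA u \<Longrightarrow> \<not> grpB u"
  unfolding grpA_def grpB_def by auto

theorem proposition4p3:
  fixes c :: "(2 \<times> 4) list"
  assumes "irreducible_quiddity c"
  shows "length c \<in> {3, 4, 6}"
proof (rule ccontr)
  assume nl: "length c \<notin> {3, 4, 6}"
  have q: "lambda_quiddity c" and nr: "\<not> reducible_quiddity c"
    using assms unfolding irreducible_quiddity_def by auto
  have l1: "length c \<ge> 1" using q unfolding lambda_quiddity_def by auto
  consider "length c = 1" | "length c = 2" | "length c = 5" | "length c \<ge> 7"
    using nl l1 by force
  then show False
  proof cases
    case 1
    then obtain a where "c = [a]" by (cases c) auto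
    then show False using q by (simp add: qsimps)
  next
    case 2
    then obtain a b where c: "c = [a, b]"
      by (cases c; cases "tl c") auto
    have "a = (0,0) \<and> b = (0,0)"
      using q[unfolded c] ex8[of a] ex8[of b] by (elim disjE) (simp_all add: qsimps)
    then show False using nr c unfolding reducible_quiddity_def by (auto simp: zero_prod_def)
  next
    case 3
    then obtain p q s t u where c: "c = [p,q,s,t,u]"
      by (cases c; cases "tl c"; cases "tl (tl c)"; cases "tl (tl (tl c))";
          cases "tl (tl (tl (tl c)))") auto
    have R: "\<And>w k r. ext w \<Longrightarrow> w \<noteq> [] \<Longrightarrow> rotate k c = w @ r \<Longrightarrow> length r \<ge> 3 \<Longrightarrow> False"
      using nr reduce_ext by blast
    have "\<not> ext [p]" using R[of "[p]" 0 "[q,s,t,u]"] by (auto simp: c)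
    moreover have "\<not> ext [q]" using R[of "[q]" 1 "[s,t,u,p]"] by (auto simp: c)
    moreover have "\<not> ext [s]" using R[of "[s]" 2 "[t,u,p,q]"] by (auto simp: c numeral_eq_Suc)
    moreover have "\<not> ext [t]" using R[of "[t]" 3 "[u,p,q,s]"] by (auto simp: c numeral_eq_Suc)
    moreover have "\<not> ext [u]" using R[of "[u]" 4 "[p,q,s,t]"] by (auto simp: c numeral_eq_Suc)
    ultimately have nes: "\<not> ext [p]" "\<not> ext [q]" "\<not> ext [s]" "\<not> ext [t]" "\<not> ext [u]" by auto
    have "\<not> ext [p,q]" using R[of "[p,q]" 0 "[s,t,u]"] by (auto simp: c)
    moreover have "\<not> ext [q,s]" using R[of "[q,s]" 1 "[t,u,p]"] by (auto simp: c)
    moreover have "\<not> ext [s,t]" using R[of "[s,t]" 2 "[u,p,q]"] by (auto simp: c numeral_eq_Suc)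
    moreover have "\<not> ext [t,u]" using R[of "[t,u]" 3 "[p,q,s]"] by (auto simp: c numeral_eq_Suc)
    moreover have "\<not> ext [u,p]" using R[of "[u,p]" 4 "[q,s,t]"] by (auto simp: c numeral_eq_Suc)
    ultimately have nep: "\<not> ext [p,q]" "\<not> ext [q,s]" "\<not> ext [s,t]" "\<not> ext [t,u]" "\<not> ext [u,p]" by auto
    have g1: "(grpA p \<and> grpA q) \<or> (grpB p \<and> grpB q)" using pairs[of p q] nes nep by auto
    have g2: "(grpA q \<and> grpA s) \<or> (grpB q \<and> grpB s)" using pairs[of q s] nes nep by auto
    have g3: "(grpA s \<and> grpA t) \<or> (grpB s \<and> grpB t)" using pairs[of s t] nes nep by auto
    have g4: "(grpA t \<and> grpA u) \<or> (grpB t \<and> grpB u)" using pairs[of t u] nes nep by auto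
    show False using g1 g2 g3 g4 fiveA[of p q s t u] fiveB[of p q s t u] q grpAB c by blast
  next
    case 4
    then obtain p q s t rest where c: "c = p # q # s # t # rest" and lr: "length rest \<ge> 3"
      by (cases c; cases "tl c"; cases "tl (tl c)"; cases "tl (tl (tl c))") auto
    have R: "\<And>w k r. ext w \<Longrightarrow> w \<noteq> [] \<Longrightarrow> rotate k c = w @ r \<Longrightarrow> length r \<ge> 3 \<Longrightarrow> False"
      using nr reduce_ext by blast
    have "\<not> ext [p]" using R[of "[p]" 0 "q#s#t#rest"] lr by (auto simp: c)
    moreover have "\<not> ext [q]" using R[of "[q]" 1 "s#t#rest@[p]"] lr by (auto simp: c)
    moreover have "\<not> ext [s]" using R[of "[s]" 2 "t#rest@[p,q]"] lr by (auto simp: c numeral_eq_Suc)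
    moreover have "\<not> ext [t]" using R[of "[t]" 3 "rest@[p,q,s]"] lr by (auto simp: c numeral_eq_Suc)
    moreover have "\<not> ext [p,q]" using R[of "[p,q]" 0 "s#t#rest"] lr by (auto simp: c)
    moreover have "\<not> ext [q,s]" using R[of "[q,s]" 1 "t#rest@[p]"] lr by (auto simp: c)
    moreover have "\<not> ext [s,t]" using R[of "[s,t]" 2 "rest@[p,q]"] lr by (auto simp: c numeral_eq_Suc)
    moreover have "\<not> ext [p,q,s,t]" using R[of "[p,q,s,t]" 0 "rest"] lr by (auto simp: c)
    ultimately show False using pairs[of p q] pairs[of q s] pairs[of s t] quadA[of p q s t]
        quadB[of p q s t] grpAB by blast
  qed
qed

end
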